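(* Let $f:[0,1]\to\mathbb R$ satisfy $|f(x')-f(x'')|\le H|x'-x''|^{1/N}$, let $X^*$ be the set of global minimizers of $f$ on $[0,1]$, apply PLT indefinitely (stopping rule disregarded) with $p(l)\le Q<\infty$ for all $l>1$, and let $\{x^q\}$ be the trial sequence. Suppose that for every $x^*\in X^*$ the condition of Theorem 2 holds, i.e. there is an infinite set of iteration numbers $\{h\}=\{h(x^* )\}$ such that for all $l\in\{h\}$, with $j=j(l)$ the index of an interval $[x_{j-1},x_j]$ containing $x^*$, one has $4^{1-1/N}K_j^2\ge M_j^2$ and $r\mu_j\ge 2^{1-1/N}K_j+(4^{1-1/N}K_j^2-M_j^2)^{1/2}$, where $K_j=\max\{(z_{j-1}-f(x^* ))(x^*-x_{j-1})^{-1/N},(z_j-f(x^* ))(x_j-x^* )^{-1/N}\}$ and $M_j=|z_{j-1}-z_j|(x_j-x_{j-1})^{-1/N}$. Then the set of limit points of $\{x^q\}$ coincides with $X^*$.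
   Context: Algorithm PLT (parallel information algorithm with local tuning) for minimizing $f$ on $[0,1]$; parameters: integer $N\ge1$, reliability parameter $r>1$, small number $\xi>0$. A "trial" is an evaluation of $f$ at a point. Step 0: perform $q(1)>1$ initial trials at $x^1=0$, $x^2=1$ and some interior points $x^3,\dots,x^{q(1)}\in(0,1)$; set $l=1$. At iteration $l$, let $q=q(l)$ be the number of trials made so far. Step 1: order all trial points as $0=x_1<x_2<\dots<x_q=1$ and set $z_i=f(x_i)$. Step 2: for $2\le j\le q$ compute $\mu_j=\max\{\lambda_j,\gamma_j,\xi\}$, where $\lambda_j=\max\{|z_i-z_{i-1}|/(x_i-x_{i-1})^{1/N}: i\in I_j\}$ with $I_2=\{2,3\}$, $I_j=\{j-1,j,j+1\}$ for $3\le j\le q-1$, $I_q=\{q-1,q\}$; and $\gamma_j=\mu\,(x_j-x_{j-1})^{1/N}/(X^{\max})^{1/N}$ with $\mu=\max\{|z_i-z_{i-1}|/(x_i-x_{i-1})^{1/N}:2\le i\le q\}$ and $X^{\max}=\max\{x_i-x_{i-1}:2\le i\le q\}$. Step 3: for $2\le j\le q$ compute the characteristic $R(j)=r\mu_j(x_j-x_{j-1})^{1/N}+\frac{(z_j-z_{j-1})^2}{r\mu_j(x_j-x_{j-1})^{1/N}}-(z_j+z_{j-1})$. Step 4: choose $p=p(l+1)\le q(l)-1$ and distinct indices $t_1,\dots,t_p$ being the indices of the $p$ largest characteristics ($t_1=\arg\max\{R(i):1<i\le q\}$, $t_k=\arg\max\{R(i):1<i\le q,\ i\ne t_s, 1\le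 s\le k-1\}$); the new trial points are $x^{q+k}=\tfrac12(x_{t_k-1}+x_{t_k})-\frac{1}{2r}\left(\frac{|z_{t_k}-z_{t_k-1}|}{\mu_{t_k}}\right)^N\operatorname{sign}(z_{t_k}-z_{t_k-1})$, $1\le k\le p$. Step 5: evaluate $f$ at these $p$ points in parallel, set $q(l+1)=q(l)+p(l+1)$, $l\leftarrow l+1$, and return to Step 1. *)

theory Defs
  imports Complex_Main
begin

text \<open>Algorithm PLT. A sorted list ys of the current trial points is used with
  1-based indexing: x_i = pt ys i, i = 1..q, q = length ys.\<close>

definition pt :: "real list \<Rightarrow> nat \<Rightarrow> real" where
  "pt ys i = ys ! (i - 1)"

definition sorted_trials :: "(nat \<Rightarrow> real) \<Rightarrow> nat \<Rightarrow> real list" where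
  "sorted_trials xs q = sorted_list_of_set (xs ` {1..q})"

definition slope :: "(real \<Rightarrow> real) \<Rightarrow> nat \<Rightarrow> real list \<Rightarrow> nat \<Rightarrow> real" where
  "slope f N ys i = \<bar>f (pt ys i) - f (pt ys (i - 1))\<bar> / (pt ys i - pt ys (i - 1)) powr (1 / real N)"

text \<open>I_j = {j-1,j,j+1} restricted to the valid indices 2..q
  (gives I_2 = {2,3}, I_q = {q-1,q} for q >= 3).\<close>
definition Ind :: "real list \<Rightarrow> nat \<Rightarrow> nat set" where
  "Ind ys j = {j - 1 .. j + 1} \<inter> {2 .. length ys}"

definition lam :: "(real \<Rightarrow> real) \<Rightarrow> nat \<Rightarrow> real list \<Rightarrow> nat \<Rightarrow> real" where
  "lam f N ys j = Max (slope f N ys ` Ind ys j)"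

definition mumax :: "(real \<Rightarrow> real) \<Rightarrow> nat \<Rightarrow> real list \<Rightarrow> real" where
  "mumax f N ys = Max (slope f N ys ` {2 .. length ys})"

definition Xmax :: "real list \<Rightarrow> real" where
  "Xmax ys = Max ((\<lambda>i. pt ys i - pt ys (i - 1)) ` {2 .. length ys})"

definition gam :: "(real \<Rightarrow> real) \<Rightarrow> nat \<Rightarrow> real list \<Rightarrow> nat \<Rightarrow> real" where
  "gam f N ys j = mumax f N ys * (pt ys j - pt ys (j - 1)) powr (1 / real N)
                   / (Xmax ys) powr (1 / real N)"

definition muj :: "(real \<Rightarrow> real) \<Rightarrow> nat \<Rightarrow> real \<Rightarrow> real list \<Rightarrow> nat \<Rightarrow> real" where
  "muj f N \<xi> ys j = max (max (lam f N ys j) (gam f N ys j)) \<xi>"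

definition charR :: "(real \<Rightarrow> real) \<Rightarrow> nat \<Rightarrow> real \<Rightarrow> real \<Rightarrow> real list \<Rightarrow> nat \<Rightarrow> real" where
  "charR f N r \<xi> ys j =
     (let d = r * muj f N \<xi> ys j * (pt ys j - pt ys (j - 1)) powr (1 / real N);
          zj = f (pt ys j); zj1 = f (pt ys (j - 1))
      in d + (zj - zj1)\<^sup>2 / d - (zj + zj1))"

definition newpt :: "(real \<Rightarrow> real) \<Rightarrow> nat \<Rightarrow> real \<Rightarrow> real \<Rightarrow> real list \<Rightarrow> nat \<Rightarrow> real" where
  "newpt f N r \<xi> ys t =
     (let zt = f (pt ys t); zt1 = f (pt ys (t - 1))
      in (pt ys (t - 1) + pt ys t) / 2
         - 1 / (2 * r) * (\<bar>zt - zt1\<bar> / muj f N \<xi> ys t) ^ N * sgn (zt - zt1))"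

text \<open>A run of PLT: xs k = x^k (k >= 1) is the trial sequence, q l = q(l) (l >= 1)
  the number of trials made before iteration l, p l = p(l) (l >= 2).
  All choices left open by the algorithm (initial interior points, p(l+1),
  tie-breaking among equal characteristics) are existentially free.\<close>
definition PLT_run ::
  "(real \<Rightarrow> real) \<Rightarrow> nat \<Rightarrow> real \<Rightarrow> real \<Rightarrow> nat \<Rightarrow>
   (nat \<Rightarrow> real) \<Rightarrow> (nat \<Rightarrow> nat) \<Rightarrow> (nat \<Rightarrow> nat) \<Rightarrow> bool" where
  "PLT_run f N r \<xi> Q xs q p \<longleftrightarrow>
     q 1 > 1 \<and> xs 1 = 0 \<and> xs 2 = 1 \<and>
     (\<forall>k \<in> {3 .. q 1}. 0 < xs k \<and> xs k < 1) \<and> inj_on xs {1 .. q 1} \<and>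
     (\<forall>l \<ge> 1.
        let ys = sorted_trials xs (q l) in
        1 \<le> p (l + 1) \<and> p (l + 1) \<le> q l - 1 \<and> p (l + 1) \<le> Q \<and>
        q (l + 1) = q l + p (l + 1) \<and>
        (\<exists>t :: nat \<Rightarrow> nat. \<forall>k \<in> {1 .. p (l + 1)}.
            t k \<in> {2 .. q l} \<and> t k \<notin> t ` {1 ..< k} \<and>
            (\<forall>i \<in> {2 .. q l}. i \<notin> t ` {1 ..< k} \<longrightarrow>
                charR f N r \<xi> ys i \<le> charR f N r \<xi> ys (t k)) \<and>
            xs (q l + k) = newpt f N r \<xi> ys (t k)))"

definition Kj :: "(real \<Rightarrow> real) \<Rightarrow> nat \<Rightarrow> real list \<Rightarrow> real \<Rightarrow> nat \<Rightarrow> real" where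
  "Kj f N ys xstar j =
     max ((f (pt ys (j - 1)) - f xstar) * (xstar - pt ys (j - 1)) powr (- (1 / real N)))
         ((f (pt ys j) - f xstar) * (pt ys j - xstar) powr (- (1 / real N)))"

definition Mj :: "(real \<Rightarrow> real) \<Rightarrow> nat \<Rightarrow> real list \<Rightarrow> nat \<Rightarrow> real" where
  "Mj f N ys j = \<bar>f (pt ys (j - 1)) - f (pt ys j)\<bar> * (pt ys j - pt ys (j - 1)) powr (- (1 / real N))"

definition global_minimizers :: "(real \<Rightarrow> real) \<Rightarrow> real set" where
  "global_minimizers f = {x \<in> {0..1}. \<forall>y \<in> {0..1}. f x \<le> f y}"

definition limit_points :: "(nat \<Rightarrow> real) \<Rightarrow> real set" where
  "limit_points xs = {y. \<exists>\<sigma>. strict_mono \<sigma> \<and> (xs \<circ> \<sigma>) \<longlonglongrightarrow> y}"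

end

theory Submission
  imports Defs "HOL-Analysis.Analysis"
begin

lemma sorted_pt:
  fixes S :: "real set" assumes fin: "finite S"
  shows "length (sorted_list_of_set S) = card S"
    and "\<And>i j. 1 \<le> i \<Longrightarrow> i < j \<Longrightarrow> j \<le> card S \<Longrightarrow> pt (sorted_list_of_set S) i < pt (sorted_list_of_set S) j"
    and "\<And>i. 1 \<le> i \<Longrightarrow> i \<le> card S \<Longrightarrow> pt (sorted_list_of_set S) i \<in> S"
    and "\<And>s. s \<in> S \<Longrightarrow> \<exists>i. 1 \<le> i \<and> i \<le> card S \<and> pt (sorted_list_of_set S) i = s"
proof -
  let ?ys = "sorted_list_of_set S"
  show len: "length ?ys = card S" by simp
  have ss: "sorted_wrt (<) ?ys" by (rule strict_sorted_list_of_set)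
  show "pt ?ys i < pt ?ys j" if "1 \<le> i" "i < j" "j \<le> card S" for i j
    unfolding pt_def using sorted_wrt_nth_less[OF ss, of "i-1" "j-1"] that len by simp
  show "pt ?ys i \<in> S" if "1 \<le> i" "i \<le> card S" for i
  proof -
    have "?ys ! (i-1) \<in> set ?ys" using that len by (intro nth_mem) simp
    then show ?thesis unfolding pt_def using fin by simp
  qed
  show "\<exists>i. 1 \<le> i \<and> i \<le> card S \<and> pt ?ys i = s" if "s \<in> S" for s
  proof -
    have "s \<in> set ?ys" using that fin by simp
    then obtain m where "m < length ?ys" "?ys ! m = s" by (auto simp: in_set_conv_nth)
    then show ?thesis unfolding pt_def using len by (intro exI[of _ "m+1"]) auto
  qed
qed

lemma conc_powr:
  fixes u v e :: real
  assumes "0 \<le> u" "0 \<le> v" "0 < e" "e \<le> 1"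
  shows "u powr e + v powr e \<le> 2 powr (1-e) * (u+v) powr e"
proof (cases "u = 0 \<or> v = 0")
  case True
  have "1 \<le> 2 powr (1-e)" using assms by (simp add: ge_one_powr_ge_zero)
  then show ?thesis using True assms
    by (auto simp: mult_le_cancel_right1)
next
  case False
  then have up: "u > 0" and vp: "v > 0" using assms by auto
  define m where "m = (u+v)/2"
  have mp: "m > 0" using up vp m_def by simp
  have y1: "(u/m) powr e * 1 powr (1-e) \<le> e*(u/m) + (1-e)*1"
    by (rule Youngs_inequality_0) (use assms up mp in auto)
  have y2: "(v/m) powr e * 1 powr (1-e) \<le> e*(v/m) + (1-e)*1"
    by (rule Youngs_inequality_0) (use assms vp mp in auto)
  have uv: "(u+v)/m = 2" using mp unfolding m_def by (simp add: field_simps)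
  have "e*(u/m) + e*(v/m) = e*((u+v)/m)" by (simp add: add_divide_distrib ring_distribs)
  then have "e*(u/m) + e*(v/m) = 2*e" using uv by simp
  then have "(u/m) powr e + (v/m) powr e \<le> 2" using y1 y2 by simp
  then have "(u powr e + v powr e) / m powr e \<le> 2"
    using up vp mp by (simp add: powr_divide add_divide_distrib)
  then have "u powr e + v powr e \<le> 2 * m powr e" using mp by (simp add: pos_divide_le_eq)
  also have "m powr e = (u+v) powr e / 2 powr e" unfolding m_def using up vp by (simp add: powr_divide)
  also have "2 * ((u+v) powr e / 2 powr e) = 2 powr (1-e) * (u+v) powr e"
    by (simp add: powr_diff)
  finally show ?thesis .
qed

lemma powr_inv_N: fixes D :: real assumes "D > 0" "N \<ge> 1"
  shows "(D powr (1/real N)) ^ N = D"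
  using assms by (simp add: powr_power)

lemma slope_nonneg: "slope f N ys i \<ge> 0"
  unfolding slope_def by simp

lemma slope_le_lam:
  assumes "2 \<le> t" "t \<le> length ys"
  shows "slope f N ys t \<le> lam f N ys t"
proof -
  have "t \<in> Ind ys t" using assms unfolding Ind_def by auto
  moreover have "finite (Ind ys t)" unfolding Ind_def by simp
  ultimately show ?thesis unfolding lam_def by (intro Max_ge) auto
qed

lemma slope_le_muj:
  assumes "2 \<le> t" "t \<le> length ys"
  shows "slope f N ys t \<le> muj f N \<xi> ys t"
  using slope_le_lam[OF assms, where f=f and N=N] unfolding muj_def by simp

lemma muj_ge: "muj f N \<xi> ys t \<ge> \<xi>"
  unfolding muj_def by simp

lemma dz_le:
  assumes "2 \<le> t" "t \<le> length ys" "pt ys (t-1) < pt ys t" "\<xi> > 0"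
  shows "\<bar>f (pt ys t) - f (pt ys (t-1))\<bar> \<le> muj f N \<xi> ys t * (pt ys t - pt ys (t-1)) powr (1/real N)"
proof -
  have D: "(pt ys t - pt ys (t-1)) powr (1/real N) > 0" using assms(3) by simp
  have "slope f N ys t \<le> muj f N \<xi> ys t" by (rule slope_le_muj[OF assms(1,2)])
  then show ?thesis using D unfolding slope_def by (simp add: pos_divide_le_eq)
qed

lemma newpt_pos:
  assumes t: "2 \<le> t" "t \<le> length ys" and ab: "pt ys (t-1) < pt ys t" and xi: "\<xi> > 0"
    and r: "r > 1" and N: "N \<ge> 1"
  shows "pt ys (t-1) + (1-1/r)/2*(pt ys t - pt ys (t-1)) \<le> newpt f N r \<xi> ys t"
    and "newpt f N r \<xi> ys t \<le> pt ys t - (1-1/r)/2*(pt ys t - pt ys (t-1))"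
proof -
  define a where "a = pt ys (t-1)"
  define b where "b = pt ys t"
  define dz where "dz = f b - f a"
  define \<mu> where "\<mu> = muj f N \<xi> ys t"
  define X where "X = \<bar>dz\<bar> / \<mu>"
  have mup: "\<mu> > 0" using muj_ge[where f=f and N=N and \<xi>=\<xi> and ys=ys and t=t] xi unfolding \<mu>_def by linarith
  have Dp: "b - a > 0" using ab unfolding a_def b_def by simp
  have "\<bar>dz\<bar> \<le> \<mu> * (b-a) powr (1/real N)"
    using dz_le[OF t ab xi, where f=f and N=N] unfolding dz_def \<mu>_def a_def b_def .
  then have "X \<le> (b-a) powr (1/real N)" unfolding X_def using mup by (simp add: divide_le_eq mult.commute)
  then have "X ^ N \<le> ((b-a) powr (1/real N)) ^ N" unfolding X_def
    by (intro power_mono) (use mup in auto)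
  also have "\<dots> = b - a" using powr_inv_N[OF Dp N] .
  finally have XN: "X ^ N \<le> b - a" .
  have X0: "X ^ N \<ge> 0" unfolding X_def using mup by simp
  define w where "w = 1 / (2 * r) * X ^ N * sgn dz"
  have "\<bar>w\<bar> \<le> 1/(2*r) * X^N" unfolding w_def using r X0
    by (auto simp: abs_mult sgn_real_def)
  also have "\<dots> \<le> 1/(2*r) * (b - a)" using XN r by (intro mult_left_mono) auto
  finally have wle: "\<bar>w\<bar> \<le> (b-a)/(2*r)" by simp
  have np: "newpt f N r \<xi> ys t = (a+b)/2 - w"
    unfolding newpt_def Let_def w_def X_def dz_def \<mu>_def a_def b_def by simp
  have e1: "a + (1-1/r)/2*(b-a) = (a+b)/2 - (b-a)/(2*r)" using r by (simp add: field_simps)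
  have e2: "b - (1-1/r)/2*(b-a) = (a+b)/2 + (b-a)/(2*r)" using r by (simp add: field_simps)
  show "pt ys (t-1) + (1-1/r)/2*(pt ys t - pt ys (t-1)) \<le> newpt f N r \<xi> ys t"
    using e1 np wle unfolding a_def[symmetric] b_def[symmetric] by linarith
  show "newpt f N r \<xi> ys t \<le> pt ys t - (1-1/r)/2*(pt ys t - pt ys (t-1))"
    using e2 np wle unfolding a_def[symmetric] b_def[symmetric] by linarith
qed

lemma charR_bounds:
  assumes t: "2 \<le> t" "t \<le> length ys" and ab: "pt ys (t-1) < pt ys t" and xi: "\<xi> > 0"
    and r: "r > 1"
  shows "charR f N r \<xi> ys t \<ge> -2 * f (pt ys t)"
    and "charR f N r \<xi> ys t \<ge> -2 * f (pt ys (t-1))"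
    and "charR f N r \<xi> ys t \<le> 2 * r * muj f N \<xi> ys t * (pt ys t - pt ys (t-1)) powr (1/real N)
          - f (pt ys t) - f (pt ys (t-1))"
proof -
  define a where "a = pt ys (t-1)"
  define b where "b = pt ys t"
  define \<mu> where "\<mu> = muj f N \<xi> ys t"
  define d where "d = r * \<mu> * (b-a) powr (1/real N)"
  have mup: "\<mu> > 0" using muj_ge[where f=f and N=N and \<xi>=\<xi> and ys=ys and t=t] xi unfolding \<mu>_def by linarith
  have Dp: "(b - a) powr (1/real N) > 0" using ab unfolding a_def b_def by simp
  have dp: "d > 0" unfolding d_def using mup Dp r by simp
  have dz: "\<bar>f b - f a\<bar> \<le> \<mu> * (b-a) powr (1/real N)"
    using dz_le[OF t ab xi, where f=f and N=N] unfolding \<mu>_def a_def b_def .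
  have h0: "\<mu> * (b-a) powr (1/real N) \<ge> 0" using mup by simp
  have "\<mu> * (b-a) powr (1/real N) \<le> r * (\<mu> * (b-a) powr (1/real N))"
    using h0 r by (simp add: mult_le_cancel_right1)
  then have "\<mu> * (b-a) powr (1/real N) \<le> d" unfolding d_def by (simp add: mult.assoc)
  with dz have dzd: "\<bar>f b - f a\<bar> \<le> d" by linarith
  have Rdef: "charR f N r \<xi> ys t = d + (f b - f a)^2 / d - (f b + f a)"
    unfolding charR_def Let_def d_def \<mu>_def a_def b_def by simp
  have sq0: "(f b - f a)^2 / d \<ge> 0" using dp by simp
  have "(f b - f a)^2 \<le> d^2" using dzd by (metis abs_le_square_iff abs_of_pos dp)
  then have sqd: "(f b - f a)^2 / d \<le> d" using dp by (simp add: divide_le_eq power2_eq_square)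
  show "charR f N r \<xi> ys t \<ge> -2 * f (pt ys t)"
    using Rdef sq0 dzd unfolding b_def[symmetric] by linarith
  show "charR f N r \<xi> ys t \<ge> -2 * f (pt ys (t-1))"
    using Rdef sq0 dzd unfolding a_def[symmetric] by linarith
  show "charR f N r \<xi> ys t \<le> 2 * r * muj f N \<xi> ys t * (pt ys t - pt ys (t-1)) powr (1/real N)
          - f (pt ys t) - f (pt ys (t-1))"
    using Rdef sqd unfolding a_def[symmetric] b_def[symmetric] \<mu>_def[symmetric] d_def by linarith
qed

lemma muj_le:
  assumes j: "2 \<le> j" "j \<le> length ys"
    and sl: "\<forall>i \<in> {2..length ys}. slope f N ys i \<le> H"
    and inc: "\<forall>i \<in> {2..length ys}. pt ys (i-1) < pt ys i"
  shows "muj f N \<xi> ys j \<le> max H \<xi>"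
proof -
  have fI: "finite (Ind ys j)" unfolding Ind_def by simp
  have neI: "Ind ys j \<noteq> {}" using j unfolding Ind_def by auto
  have "lam f N ys j \<le> H" unfolding lam_def using fI neI sl
    by (subst Max_le_iff) (auto simp: Ind_def)
  have ne2: "{2..length ys} \<noteq> {}" using j by auto
  have mm: "mumax f N ys \<le> H" unfolding mumax_def using ne2 sl by (subst Max_le_iff) auto
  have mm0: "mumax f N ys \<ge> 0" unfolding mumax_def using ne2 j
    by (meson Max_ge atLeastAtMost_iff finite_atLeastAtMost finite_imageI image_eqI order_trans slope_nonneg)
  have Dj: "pt ys j - pt ys (j-1) > 0" using inc j by auto
  have Xge: "Xmax ys \<ge> pt ys j - pt ys (j-1)" unfolding Xmax_def using j by (intro Max_ge) auto
  have "(pt ys j - pt ys (j-1)) powr (1/real N) \<le> Xmax ys powr (1/real N)"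
    using Dj Xge by (intro powr_mono2) auto
  moreover have "Xmax ys powr (1/real N) > 0" using Dj Xge by simp
  ultimately have q1: "(pt ys j - pt ys (j-1)) powr (1/real N) / Xmax ys powr (1/real N) \<le> 1"
    by simp
  have "gam f N ys j = mumax f N ys * ((pt ys j - pt ys (j-1)) powr (1/real N) / Xmax ys powr (1/real N))"
    unfolding gam_def by simp
  also have "\<dots> \<le> mumax f N ys * 1" using q1 mm0 by (intro mult_left_mono) auto
  finally have "gam f N ys j \<le> H" using mm by simp
  with \<open>lam f N ys j \<le> H\<close> show ?thesis unfolding muj_def by (intro max.mono max.boundedI) auto
qed

lemma key_ineq:
  fixes a b x fs za zb \<mu> r e \<xi> K M :: real
  assumes ax: "a \<le> x" and xb: "x \<le> b" and ab: "a < b" and e: "0 < e" "e \<le> 1"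
    and za: "za \<ge> fs" and zb: "zb \<ge> fs" and xa: "x = a \<Longrightarrow> za = fs" and xb': "x = b \<Longrightarrow> zb = fs"
    and mu: "\<mu> \<ge> \<xi>" and xi: "\<xi> > 0" and r: "r > 0"
    and K: "K = max ((za - fs) * (x-a) powr (-e)) ((zb - fs) * (b - x) powr (-e))"
    and M: "M = \<bar>za - zb\<bar> * (b-a) powr (-e)"
    and c1: "4 powr (1-e) * K^2 \<ge> M^2"
    and c2: "r*\<mu> \<ge> 2 powr (1-e)*K + sqrt(4 powr (1-e)*K^2 - M^2)"
  shows "r*\<mu>*(b-a) powr e + (zb - za)^2/(r*\<mu>*(b-a) powr e) - (zb + za) \<ge> -2*fs + r*\<xi>/2*(b-a) powr e"
proof -
  have K0: "K \<ge> 0" unfolding K using za by (simp add: le_max_iff_disj)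
  have P1: "za - fs \<le> K * (x-a) powr e"
  proof (cases "x = a")
    case True then show ?thesis using xa by simp
  next
    case False
    then have xp: "x - a > 0" using ax by simp
    have "(za - fs) * (x-a) powr (-e) \<le> K" unfolding K by simp
    then have "(za - fs) * (x-a) powr (-e) * (x-a) powr e \<le> K * (x-a) powr e"
      by (intro mult_right_mono) auto
    moreover have "(x-a) powr (-e) * (x-a) powr e = 1" using xp by (simp add: powr_add[symmetric])
    ultimately show ?thesis by (simp add: mult.assoc)
  qed
  have P2: "zb - fs \<le> K * (b-x) powr e"
  proof (cases "x = b")
    case True then show ?thesis using xb' by simp
  next
    case False
    then have xp: "b - x > 0" using xb by simp
    have "(zb - fs) * (b-x) powr (-e) \<le> K" unfolding K by simp
    then have "(zb - fs) * (b-x) powr (-e) * (b-x) powr e \<le> K * (b-x) powr e"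
      by (intro mult_right_mono) auto
    moreover have "(b-x) powr (-e) * (b-x) powr e = 1" using xp by (simp add: powr_add[symmetric])
    ultimately show ?thesis by (simp add: mult.assoc)
  qed
  define c where "c = 2 powr (1-e)"
  define D where "D = (b-a) powr e"
  have Dp: "D > 0" unfolding D_def using ab by simp
  have conc: "(x-a) powr e + (b-x) powr e \<le> c * D"
    using conc_powr[of "x-a" "b-x" e] ax xb e unfolding c_def D_def by simp
  have "za + zb - 2*fs \<le> K * ((x-a) powr e + (b-x) powr e)" using P1 P2 by (simp add: ring_distribs)
  also have "\<dots> \<le> K * (c*D)" using conc K0 by (intro mult_left_mono) auto
  finally have sum: "za + zb - 2*fs \<le> c*K*D" by (simp add: mult_ac)
  have c2e: "c^2 = 4 powr (1-e)" unfolding c_def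
    by (simp add: power2_eq_square powr_mult[symmetric])
  define T where "T = r * \<mu>"
  have Tp: "T \<ge> r*\<xi>" unfolding T_def using mu r by simp
  have Tpos: "T > 0" using Tp r xi by (smt (verit) mult_pos_pos)
  define s where "s = sqrt (c^2*K^2 - M^2)"
  have s0: "s \<ge> 0" unfolding s_def using c1 c2e by simp
  have s2: "s^2 = c^2*K^2 - M^2" unfolding s_def using c1 c2e by simp
  define u where "u = T - c*K"
  have us: "u \<ge> s" unfolding u_def s_def T_def using c2 c2e c_def by simp
  have u0: "u \<ge> 0" using us s0 by simp
  have "s^2 \<le> u^2" using us s0 by (simp add: power_mono)
  then have "M^2 \<ge> c^2*K^2 - u^2" using s2 by simp
  also have "c^2*K^2 - u^2 = T*(T - 2*u)" unfolding u_def by (simp add: algebra_simps power2_eq_square)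
  finally have M2: "M^2 \<ge> T*(T - 2*u)" .
  have MD: "(zb - za)^2 = M^2 * D^2"
  proof -
    have "(b-a) powr (-e) * (b-a) powr e = 1" using ab by (simp add: powr_add[symmetric])
    then have "M * D = \<bar>za - zb\<bar>" unfolding M D_def by (simp add: mult.assoc)
    then have "(M*D)^2 = (zb - za)^2" by (simp add: power2_abs abs_minus_commute power2_commute)
    then show ?thesis by (simp add: power_mult_distrib)
  qed
  have frac: "(zb - za)^2/(T*D) = M^2 * D / T" using Dp Tpos MD by (simp add: power2_eq_square)
  have M2T: "M^2/T \<ge> T - 2*u" using M2 Tpos by (simp add: pos_le_divide_eq mult.commute)
  have M2T0: "M^2/T \<ge> 0" using Tpos by simp
  have key: "u + M^2/T \<ge> T/2" using M2T M2T0 by linarith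
  have "T*D + M^2*D/T - c*K*D = D*(u + M^2/T)" unfolding u_def by (simp add: algebra_simps)
  also have "\<dots> \<ge> D*(T/2)" using key Dp by (intro mult_left_mono) auto
  finally have A1: "T*D + M^2*D/T - c*K*D \<ge> D*(T/2)" .
  have A2': "D*(T/2) \<ge> D*(r*\<xi>/2)" using Tp Dp by (intro mult_left_mono) auto
  have A2: "D*(T/2) \<ge> r*\<xi>/2*D" using A2' by (simp add: mult.commute)
  have "T*D + (zb - za)^2/(T*D) - (zb + za) \<ge> -2*fs + r*\<xi>/2*D"
    using A1 A2 sum frac by linarith
  then show ?thesis unfolding T_def D_def by simp
qed


locale plt =
  fixes f :: "real \<Rightarrow> real" and N Q :: nat and r \<xi> H :: real
    and xs :: "nat \<Rightarrow> real" and q p :: "nat \<Rightarrow> nat"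
  assumes N: "N \<ge> 1" and r: "r > 1" and xi: "\<xi> > 0"
    and hoelder: "\<forall>x' \<in> {0..1}. \<forall>x'' \<in> {0..1}.
                    \<bar>f x' - f x''\<bar> \<le> H * \<bar>x' - x''\<bar> powr (1 / real N)"
    and run: "PLT_run f N r \<xi> Q xs q p"
begin

definition "Ys l = sorted_trials xs (q l)"
definition "St l = xs ` {1..q l}"
definition "Rc l i = charR f N r \<xi> (Ys l) i"
definition "Tprop l t \<longleftrightarrow> (\<forall>k\<in>{1..p(l+1)}. t k \<in> {2..q l} \<and> t k \<notin> t`{1..<k} \<and>
    (\<forall>i\<in>{2..q l}. i \<notin> t`{1..<k} \<longrightarrow> Rc l i \<le> Rc l (t k)) \<and>
    xs (q l + k) = newpt f N r \<xi> (Ys l) (t k))"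
definition "Tt l = (SOME t. Tprop l t)"

lemma run_base: "q 1 > 1" "xs 1 = 0" "xs 2 = 1" "\<forall>k\<in>{3..q 1}. 0 < xs k \<and> xs k < 1"
  "inj_on xs {1..q 1}"
  using run unfolding PLT_run_def by auto

lemma run_step:
  assumes "l \<ge> 1"
  shows "1 \<le> p(l+1)" "p(l+1) \<le> q l - 1" "p(l+1) \<le> Q" "q(l+1) = q l + p(l+1)" "Tprop l (Tt l)"
proof -
  have A: "\<forall>l\<ge>1. 1 \<le> p (l + 1) \<and> p (l + 1) \<le> q l - 1 \<and> p (l + 1) \<le> Q \<and>
        q (l + 1) = q l + p (l + 1) \<and> (\<exists>t. Tprop l t)"
    using run unfolding PLT_run_def Let_def Tprop_def Rc_def Ys_def by simp
  then show "1 \<le> p(l+1)" "p(l+1) \<le> q l - 1" "p(l+1) \<le> Q" "q(l+1) = q l + p(l+1)"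
    using assms by auto
  have "\<exists>t. Tprop l t" using A assms by auto
  then show "Tprop l (Tt l)" unfolding Tt_def by (rule someI_ex)
qed

lemma Tt_props:
  assumes "l \<ge> 1" "k \<in> {1..p(l+1)}"
  shows "Tt l k \<in> {2..q l}" "Tt l k \<notin> Tt l ` {1..<k}"
    "\<And>i. i\<in>{2..q l} \<Longrightarrow> i \<notin> Tt l ` {1..<k} \<Longrightarrow> Rc l i \<le> Rc l (Tt l k)"
    "xs (q l + k) = newpt f N r \<xi> (Ys l) (Tt l k)"
  using run_step(5)[OF assms(1)] assms(2) unfolding Tprop_def by auto

lemma Tt_inj:
  assumes "l \<ge> 1" "k1 \<in> {1..p(l+1)}" "k2 \<in> {1..p(l+1)}" "Tt l k1 = Tt l k2"
  shows "k1 = k2"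
proof (rule ccontr)
  assume ne: "k1 \<noteq> k2"
  show False
  proof (cases "k1 < k2")
    case True
    then have "Tt l k1 \<in> Tt l ` {1..<k2}" using assms(2) by auto
    then show False using Tt_props(2)[OF assms(1,3)] assms(4) by simp
  next
    case False
    then have "k2 < k1" using ne by simp
    then have "Tt l k2 \<in> Tt l ` {1..<k1}" using assms(3) by auto
    then show False using Tt_props(2)[OF assms(1,2)] assms(4) by simp
  qed
qed

lemma q_step: "l \<ge> 1 \<Longrightarrow> q l < q (l+1)"
  using run_step(1,4) by fastforce

lemma q_mono:
  assumes "1 \<le> l" "l \<le> l'" shows "q l \<le> q l'"
  using assms(2)
proof (induct l' rule: dec_induct)
  case base then show ?case by simp
next
  case (step m) then show ?case using q_step[of m] assms(1) by simp
qed

lemma q_ge: "l \<ge> 1 \<Longrightarrow> q l \<ge> l + 1"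
proof (induct l rule: nat_induct_at_least)
  case base then show ?case using run_base(1) by simp
next
  case (Suc m) then show ?case using q_step[of m] by simp
qed

lemma sorted_facts:
  assumes inj: "inj_on xs {1..q l}"
  shows "length (Ys l) = q l"
    and "\<And>i j. 1 \<le> i \<Longrightarrow> i < j \<Longrightarrow> j \<le> q l \<Longrightarrow> pt (Ys l) i < pt (Ys l) j"
    and "\<And>i. 1 \<le> i \<Longrightarrow> i \<le> q l \<Longrightarrow> pt (Ys l) i \<in> St l"
    and "\<And>s. s \<in> St l \<Longrightarrow> \<exists>i. 1 \<le> i \<and> i \<le> q l \<and> pt (Ys l) i = s"
proof -
  have fin: "finite (St l)" unfolding St_def by simp
  have card: "card (St l) = q l" unfolding St_def using card_image[OF inj] by simp
  have ys: "Ys l = sorted_list_of_set (St l)" unfolding Ys_def sorted_trials_def St_def by simp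
  show "length (Ys l) = q l" using sorted_pt(1)[OF fin] card ys by simp
  show "pt (Ys l) i < pt (Ys l) j" if "1 \<le> i" "i < j" "j \<le> q l" for i j
    using sorted_pt(2)[OF fin, of i j] that card ys by simp
  show "pt (Ys l) i \<in> St l" if "1 \<le> i" "i \<le> q l" for i
    using sorted_pt(3)[OF fin, of i] that card ys by simp
  show "\<exists>i. 1 \<le> i \<and> i \<le> q l \<and> pt (Ys l) i = s" if "s \<in> St l" for s
    using sorted_pt(4)[OF fin that] card ys by simp
qed

lemma pt_mono:
  assumes inj: "inj_on xs {1..q l}" and "1 \<le> i" "i \<le> j" "j \<le> q l"
  shows "pt (Ys l) i \<le> pt (Ys l) j"
  using sorted_facts(2)[OF inj, of i j] assms by (cases "i = j") auto

lemma gap: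
  assumes inj: "inj_on xs {1..q l}" and i: "2 \<le> i" "i \<le> q l" and s: "s \<in> St l"
  shows "\<not> (pt (Ys l) (i-1) < s \<and> s < pt (Ys l) i)"
proof
  assume H: "pt (Ys l) (i-1) < s \<and> s < pt (Ys l) i"
  obtain m where m: "1 \<le> m" "m \<le> q l" "pt (Ys l) m = s" using sorted_facts(4)[OF inj s] by blast
  show False
  proof (cases "m \<le> i - 1")
    case True
    then have "pt (Ys l) m \<le> pt (Ys l) (i-1)" using pt_mono[OF inj, of m "i-1"] m i by simp
    then show False using H m by simp
  next
    case False
    then have "pt (Ys l) i \<le> pt (Ys l) m" using pt_mono[OF inj, of i m] m i by simp
    then show False using H m by simp
  qed
qed

definition "\<alpha> = (1 - 1/r)/2"

lemma alpha_pos: "\<alpha> > 0" unfolding \<alpha>_def using r by simp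

lemma new_in_gap:
  assumes l: "l \<ge> 1" and inj: "inj_on xs {1..q l}" and k: "k \<in> {1..p(l+1)}"
  shows "2 \<le> Tt l k" "Tt l k \<le> q l" "pt (Ys l) (Tt l k - 1) < pt (Ys l) (Tt l k)"
    "pt (Ys l) (Tt l k - 1) + \<alpha> * (pt (Ys l) (Tt l k) - pt (Ys l) (Tt l k - 1)) \<le> xs (q l + k)"
    "xs (q l + k) \<le> pt (Ys l) (Tt l k) - \<alpha> * (pt (Ys l) (Tt l k) - pt (Ys l) (Tt l k - 1))"
proof -
  have t: "Tt l k \<in> {2..q l}" using Tt_props(1)[OF l k] .
  then show "2 \<le> Tt l k" "Tt l k \<le> q l" by auto
  have ab: "pt (Ys l) (Tt l k - 1) < pt (Ys l) (Tt l k)"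
    using sorted_facts(2)[OF inj, of "Tt l k - 1" "Tt l k"] t by auto
  then show "pt (Ys l) (Tt l k - 1) < pt (Ys l) (Tt l k)" .
  have len: "length (Ys l) = q l" by (rule sorted_facts(1)[OF inj])
  have t2: "2 \<le> Tt l k" "Tt l k \<le> length (Ys l)" using t len by auto
  show "pt (Ys l) (Tt l k - 1) + \<alpha> * (pt (Ys l) (Tt l k) - pt (Ys l) (Tt l k - 1)) \<le> xs (q l + k)"
    using newpt_pos(1)[OF t2 ab xi r N, where f=f] Tt_props(4)[OF l k] unfolding \<alpha>_def by simp
  show "xs (q l + k) \<le> pt (Ys l) (Tt l k) - \<alpha> * (pt (Ys l) (Tt l k) - pt (Ys l) (Tt l k - 1))"
    using newpt_pos(2)[OF t2 ab xi r N, where f=f] Tt_props(4)[OF l k] unfolding \<alpha>_def by simp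
qed

end
context plt begin

lemma inv: "l \<ge> 1 \<Longrightarrow> inj_on xs {1..q l} \<and> St l \<subseteq> {0..1}"
proof (induct l rule: nat_induct_at_least)
  case base
  have "xs k \<in> {0..1}" if "k \<in> {1..q 1}" for k
  proof -
    have "k = 1 \<or> k = 2 \<or> k \<in> {3..q 1}" using that by auto
    then show ?thesis using run_base(2,3) run_base(4)[rule_format, of k] by auto
  qed
  then show ?case using run_base(5) unfolding St_def by auto
next
  case (Suc l)
  note l = Suc(1)
  have inj: "inj_on xs {1..q l}" and rng: "St l \<subseteq> {0..1}" using Suc(2) by auto
  define n where "n = q l"
  define P where "P = p (l+1)"
  have qS: "q (Suc l) = n + P" using run_step(4)[OF l] unfolding n_def P_def by simp
  let ?a = "\<lambda>k. pt (Ys l) (Tt l k - 1)" and ?b = "\<lambda>k. pt (Ys l) (Tt l k)"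
  have gapk: "?a k < xs (n + k) \<and> xs (n + k) < ?b k" if k: "k \<in> {1..P}" for k
  proof -
    have kk: "k \<in> {1..p(l+1)}" using k unfolding P_def .
    have ab: "?a k < ?b k" using new_in_gap(3)[OF l inj kk] .
    have "0 < \<alpha> * (?b k - ?a k)" using ab alpha_pos by simp
    then show ?thesis using new_in_gap(4,5)[OF l inj kk] unfolding n_def by linarith
  qed
  have abS: "?a k \<in> St l \<and> ?b k \<in> St l" if k: "k \<in> {1..P}" for k
  proof -
    have kk: "k \<in> {1..p(l+1)}" using k unfolding P_def .
    show ?thesis using new_in_gap(1,2)[OF l inj kk] sorted_facts(3)[OF inj] by auto
  qed
  have new_notin: "xs (n+k) \<notin> St l" if k: "k \<in> {1..P}" for k
  proof
    assume "xs (n+k) \<in> St l"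
    moreover have kk: "k \<in> {1..p(l+1)}" using k unfolding P_def .
    ultimately show False using gap[OF inj, of "Tt l k" "xs (n+k)"] new_in_gap(1,2)[OF l inj kk] gapk[OF k]
      by auto
  qed
  have ord: "xs (n+k1) < xs (n+k2)" if k: "k1 \<in> {1..P}" "k2 \<in> {1..P}" "Tt l k1 < Tt l k2" for k1 k2
  proof -
    have kk: "k1 \<in> {1..p(l+1)}" "k2 \<in> {1..p(l+1)}" using k unfolding P_def by auto
    have "?b k1 \<le> ?a k2" using pt_mono[OF inj, of "Tt l k1" "Tt l k2 - 1"] k(3)
        new_in_gap(1,2)[OF l inj kk(1)] new_in_gap(1,2)[OF l inj kk(2)] by auto
    then show ?thesis using gapk[OF k(1)] gapk[OF k(2)] by linarith
  qed
  have injS: "inj_on xs {1..n+P}"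
  proof (rule inj_onI)
    fix i j assume i: "i \<in> {1..n+P}" and j: "j \<in> {1..n+P}" and e: "xs i = xs j"
    have A: "i = j" if i: "i \<in> {1..n}" and j: "j \<in> {n+1..n+P}" and e: "xs i = xs j" for i j
    proof -
      have "xs i \<in> St l" using i unfolding St_def n_def by auto
      moreover have "j - n \<in> {1..P}" using j by auto
      moreover have "n + (j - n) = j" using j by auto
      ultimately show ?thesis using new_notin[of "j - n"] e by auto
    qed
    have B: "i = j" if i: "i \<in> {n+1..n+P}" and j: "j \<in> {n+1..n+P}" and e: "xs i = xs j" for i j
    proof -
      define k1 where "k1 = i - n"
      define k2 where "k2 = j - n"
      have k: "k1 \<in> {1..P}" "k2 \<in> {1..P}" using i j unfolding k1_def k2_def by auto
      have ik: "i = n + k1" "j = n + k2" using i j unfolding k1_def k2_def by auto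
      have "Tt l k1 = Tt l k2"
      proof (rule ccontr)
        assume "Tt l k1 \<noteq> Tt l k2"
        then consider "Tt l k1 < Tt l k2" | "Tt l k2 < Tt l k1" by linarith
        then show False using ord[OF k(1,2)] ord[OF k(2,1)] e ik by cases auto
      qed
      then have "k1 = k2" using Tt_inj[OF l, of k1 k2] k unfolding P_def by auto
      then show ?thesis using ik by simp
    qed
    consider "i \<in> {1..n}" "j \<in> {1..n}" | "i \<in> {1..n}" "j \<in> {n+1..n+P}"
      | "i \<in> {n+1..n+P}" "j \<in> {1..n}" | "i \<in> {n+1..n+P}" "j \<in> {n+1..n+P}"
      using i j by fastforce
    then show "i = j"
    proof cases
      case 1 then show ?thesis using inj e unfolding n_def by (auto dest: inj_onD)
    next
      case 2 then show ?thesis using A e by blast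
    next
      case 3 then show ?thesis using A e by (metis)
    next
      case 4 then show ?thesis using B e by blast
    qed
  qed
  have rngS: "xs ` {1..n+P} \<subseteq> {0..1}"
  proof
    fix y assume "y \<in> xs ` {1..n+P}"
    then obtain i where i: "i \<in> {1..n+P}" "y = xs i" by auto
    show "y \<in> {0..1}"
    proof (cases "i \<le> n")
      case True
      then have "xs i \<in> St l" using i unfolding St_def n_def by auto
      then show ?thesis using rng i by auto
    next
      case False
      then have k: "i - n \<in> {1..P}" and ik: "i = n + (i - n)" using i by auto
      have "?a (i-n) \<in> {0..1}" "?b (i-n) \<in> {0..1}" using abS[OF k] rng by auto
      then show ?thesis using gapk[OF k] ik i by (metis atLeastAtMost_iff less_le_not_le order_trans)
    qed
  qed
  show ?case using injS rngS qS unfolding St_def by simp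
qed

lemma injq: "l \<ge> 1 \<Longrightarrow> inj_on xs {1..q l}" using inv by blast
lemma St01: "l \<ge> 1 \<Longrightarrow> St l \<subseteq> {0..1}" using inv by blast

lemma xs01: assumes "n \<ge> 1" shows "xs n \<in> {0..1}"
proof -
  have "n \<in> {1..q n}" using assms q_ge[of n] by auto
  then have "xs n \<in> St n" unfolding St_def by auto
  then show ?thesis using St01[OF assms] by auto
qed

lemma xs_inj: "inj_on xs {1..}"
proof (rule inj_onI)
  fix i j assume "i \<in> {1..}" "j \<in> {1..}" "xs i = xs j"
  moreover have "max i j \<ge> 1" using \<open>i \<in> {1..}\<close> by auto
  ultimately show "i = j" using injq[of "max i j"] q_ge[of "max i j"]
    by (auto dest: inj_onD)
qed

end

lemma floor_eq_close1:
  fixes u v :: real assumes "\<lfloor>u\<rfloor> = \<lfloor>v\<rfloor>"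
  shows "\<bar>u - v\<bar> < 1"
proof -
  have a: "real_of_int \<lfloor>u\<rfloor> \<le> u" "u < real_of_int \<lfloor>u\<rfloor> + 1"
    "real_of_int \<lfloor>v\<rfloor> \<le> v" "v < real_of_int \<lfloor>v\<rfloor> + 1" by simp_all
  have "real_of_int \<lfloor>u\<rfloor> = real_of_int \<lfloor>v\<rfloor>" using assms by simp
  then show ?thesis using a unfolding abs_less_iff by linarith
qed


lemma floor_eq_close:
  fixes x y h :: real assumes "\<lfloor>x/h\<rfloor> = \<lfloor>y/h\<rfloor>" "h > 0"
  shows "\<bar>x - y\<bar> < h"
proof -
  have "\<bar>x/h - y/h\<bar> < 1"
    using floor_eq_close1[OF assms(1)] .
  moreover have "x/h - y/h = (x - y)/h" by (rule diff_divide_distrib[symmetric])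
  ultimately have "\<bar>x - y\<bar> / h < 1" using assms(2) by (simp add: abs_divide)
  then show ?thesis using assms(2) by (simp add: pos_divide_less_eq)
qed
context plt begin

definition "LongSet \<eta> = {l. l \<ge> 1 \<and> (\<exists>k\<in>{1..p(l+1)}. pt (Ys l) (Tt l k) - pt (Ys l) (Tt l k - 1) \<ge> \<eta>)}"

lemma St_mono: "1 \<le> l \<Longrightarrow> l \<le> l' \<Longrightarrow> St l \<subseteq> St l'"
  unfolding St_def using q_mono[of l l'] by (intro image_mono) auto

lemma long_finite:
  assumes eta: "\<eta> > 0"
  shows "finite (LongSet \<eta>)"
proof (rule ccontr)
  let ?Ls = "LongSet \<eta>"
  assume inf: "infinite ?Ls"
  define kk where "kk l = (SOME k. k\<in>{1..p(l+1)} \<and> pt (Ys l) (Tt l k) - pt (Ys l) (Tt l k - 1) \<ge> \<eta>)" for l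
  have kk: "l \<ge> 1 \<and> kk l \<in> {1..p(l+1)} \<and> pt (Ys l) (Tt l (kk l)) - pt (Ys l) (Tt l (kk l) - 1) \<ge> \<eta>"
    if "l \<in> ?Ls" for l
  proof -
    have "l \<ge> 1" "\<exists>k. k\<in>{1..p(l+1)} \<and> pt (Ys l) (Tt l k) - pt (Ys l) (Tt l k - 1) \<ge> \<eta>"
      using that unfolding LongSet_def by auto
    then show ?thesis unfolding kk_def by (metis (mono_tags, lifting) someI_ex)
  qed
  define a where "a l = pt (Ys l) (Tt l (kk l) - 1)" for l
  define b where "b l = pt (Ys l) (Tt l (kk l))" for l
  define y where "y l = xs (q l + kk l)" for l
  define h where "h = \<alpha> * \<eta> / 2"
  have hp: "h > 0" unfolding h_def using alpha_pos eta by simp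
  have props: "a l \<in> {0..1} \<and> b l \<in> {0..1} \<and> b l - a l \<ge> \<eta> \<and>
      a l + 2*h \<le> y l \<and> y l \<le> b l - 2*h" if l: "l \<in> ?Ls" for l
  proof -
    have l1: "l \<ge> 1" and k: "kk l \<in> {1..p(l+1)}" and D: "b l - a l \<ge> \<eta>"
      using kk[OF l] unfolding a_def b_def by auto
    have inj: "inj_on xs {1..q l}" using injq[OF l1] .
    have "a l \<in> St l" "b l \<in> St l" unfolding a_def b_def
      using new_in_gap(1,2)[OF l1 inj k] sorted_facts(3)[OF inj] by auto
    then have ab01: "a l \<in> {0..1}" "b l \<in> {0..1}" using St01[OF l1] by auto
    have "\<alpha> * \<eta> \<le> \<alpha> * (b l - a l)" using D alpha_pos by simp
    then have "2*h \<le> \<alpha> * (b l - a l)" unfolding h_def by simp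
    moreover have "a l + \<alpha> * (b l - a l) \<le> y l" "y l \<le> b l - \<alpha> * (b l - a l)"
      using new_in_gap(4,5)[OF l1 inj k] unfolding a_def b_def y_def by auto
    ultimately show ?thesis using ab01 D by linarith
  qed
  have yin: "y l \<in> St l'" if "l \<in> ?Ls" "l < l'" for l l'
  proof -
    have l1: "l \<ge> 1" and k: "kk l \<in> {1..p(l+1)}" using kk[OF that(1)] by auto
    have "q l + kk l \<le> q (l+1)" using run_step(4)[OF l1] k by simp
    also have "q (l+1) \<le> q l'" using q_mono[of "l+1" l'] that(2) by simp
    finally have "q l + kk l \<in> {1..q l'}" using k by auto
    then show ?thesis unfolding y_def St_def by auto
  qed
  define key where "key l = (\<lfloor>a l / h\<rfloor>, \<lfloor>b l / h\<rfloor>)" for l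
  define M where "M = \<lfloor>1/h\<rfloor>"
  have "key ` ?Ls \<subseteq> {0..M} \<times> {0..M}"
  proof
    fix z assume "z \<in> key ` ?Ls"
    then obtain l where l: "l \<in> ?Ls" "z = key l" by auto
    have "a l / h \<ge> 0" "a l / h \<le> 1/h" "b l / h \<ge> 0" "b l / h \<le> 1/h"
      using props[OF l(1)] hp by (auto simp: divide_right_mono)
    then have "0 \<le> \<lfloor>a l / h\<rfloor>" "\<lfloor>a l / h\<rfloor> \<le> M" "0 \<le> \<lfloor>b l / h\<rfloor>" "\<lfloor>b l / h\<rfloor> \<le> M"
      unfolding M_def by (auto intro: floor_mono)
    then show "z \<in> {0..M} \<times> {0..M}" unfolding l(2) key_def by auto
  qed
  then have "finite (key ` ?Ls)" by (rule finite_subset) simp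
  then have "\<not> inj_on key ?Ls" using inf finite_imageD by blast
  then obtain l1 l2 where l12: "l1 \<in> ?Ls" "l2 \<in> ?Ls" "l1 \<noteq> l2" "key l1 = key l2"
    unfolding inj_on_def by blast
  have contra: False if l: "l1 \<in> ?Ls" "l2 \<in> ?Ls" "l1 < l2" "key l1 = key l2" for l1 l2
  proof -
    have "\<bar>a l1 - a l2\<bar> < h" "\<bar>b l1 - b l2\<bar> < h"
      using floor_eq_close[OF _ hp] l(4) unfolding key_def by auto
    then have y1: "a l2 < y l1" "y l1 < b l2" using props[OF l(1)] by auto
    have l21: "l2 \<ge> 1" and k2: "kk l2 \<in> {1..p(l2+1)}" using kk[OF l(2)] by auto
    have inj: "inj_on xs {1..q l2}" using injq[OF l21] .
    show False using gap[OF inj, of "Tt l2 (kk l2)" "y l1"] new_in_gap(1,2)[OF l21 inj k2]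
        yin[OF l(1,3)] y1 unfolding a_def b_def by blast
  qed
  show False
  proof (cases "l1 < l2")
    case True then show ?thesis using contra l12 by blast
  next
    case False then have "l2 < l1" using l12(3) by simp
    then show ?thesis using contra l12 by metis
  qed
qed

end
context plt begin

lemma unif_cont:
  assumes "\<epsilon> > 0"
  shows "\<exists>\<rho>>0. \<forall>x\<in>{0..1}. \<forall>z\<in>{0..1}. \<bar>x - z\<bar> < \<rho> \<longrightarrow> \<bar>f x - f z\<bar> \<le> \<epsilon>"
proof (cases "H \<le> 0")
  case True
  have "\<bar>f x - f z\<bar> \<le> \<epsilon>" if "x\<in>{0..1}" "z\<in>{0..1}" for x z
  proof -
    have "\<bar>f x - f z\<bar> \<le> H * \<bar>x - z\<bar> powr (1 / real N)" using hoelder that by blast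
    also have "\<dots> \<le> 0" using True by (simp add: mult_nonpos_nonneg)
    finally show ?thesis using assms by simp
  qed
  then show ?thesis by (intro exI[of _ 1]) auto
next
  case False
  then have Hp: "H > 0" by simp
  define \<rho> where "\<rho> = (\<epsilon>/H) powr real N"
  have rp: "\<rho> > 0" unfolding \<rho>_def using assms Hp by simp
  have "\<bar>f x - f z\<bar> \<le> \<epsilon>" if "x\<in>{0..1}" "z\<in>{0..1}" "\<bar>x - z\<bar> < \<rho>" for x z
  proof -
    have "\<bar>f x - f z\<bar> \<le> H * \<bar>x - z\<bar> powr (1 / real N)" using hoelder that by blast
    also have "\<bar>x - z\<bar> powr (1 / real N) \<le> \<rho> powr (1 / real N)"
      using that(3) by (intro powr_mono2) auto
    also have "\<rho> powr (1 / real N) = \<epsilon>/H" unfolding \<rho>_def using N assms Hp by (simp add: powr_powr)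
    finally show ?thesis using Hp by (simp add: mult_left_mono)
  qed
  then show ?thesis using rp by blast
qed

definition "Mu = max H \<xi>"
lemma Mu_pos: "Mu > 0" unfolding Mu_def using xi by simp

lemma slope_le_H:
  assumes l: "l \<ge> 1"
  shows "\<forall>i \<in> {2..length (Ys l)}. slope f N (Ys l) i \<le> H"
proof
  fix i assume i: "i \<in> {2..length (Ys l)}"
  have inj: "inj_on xs {1..q l}" using injq[OF l] .
  have len: "length (Ys l) = q l" using sorted_facts(1)[OF inj] .
  define a where "a = pt (Ys l) (i-1)"
  define b where "b = pt (Ys l) i"
  have ab: "a < b" unfolding a_def b_def using sorted_facts(2)[OF inj, of "i-1" i] i len by auto
  have "a \<in> St l" "b \<in> St l" unfolding a_def b_def using sorted_facts(3)[OF inj] i len by auto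
  then have ab01: "a \<in> {0..1}" "b \<in> {0..1}" using St01[OF l] by auto
  have "\<bar>f b - f a\<bar> \<le> H * \<bar>b - a\<bar> powr (1 / real N)" using hoelder ab01 by blast
  moreover have "(b - a) powr (1/real N) > 0" using ab by simp
  ultimately have "\<bar>f b - f a\<bar> / (b - a) powr (1/real N) \<le> H" using ab
    by (simp add: pos_divide_le_eq)
  then show "slope f N (Ys l) i \<le> H" unfolding slope_def a_def b_def .
qed

lemma inc_Ys:
  assumes l: "l \<ge> 1"
  shows "\<forall>i \<in> {2..length (Ys l)}. pt (Ys l) (i-1) < pt (Ys l) i"
  using sorted_facts(1,2)[OF injq[OF l]] by auto

lemma Rc_upper:
  assumes l: "l \<ge> 1" and t: "t \<in> {2..q l}"
  shows "Rc l t \<le> 2 * r * Mu * (pt (Ys l) t - pt (Ys l) (t-1)) powr (1/real N)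
           - f (pt (Ys l) t) - f (pt (Ys l) (t-1))"
proof -
  have inj: "inj_on xs {1..q l}" using injq[OF l] .
  have len: "length (Ys l) = q l" using sorted_facts(1)[OF inj] .
  have t2: "2 \<le> t" "t \<le> length (Ys l)" using t len by auto
  have ab: "pt (Ys l) (t-1) < pt (Ys l) t" using inc_Ys[OF l] t2 by auto
  have mu: "muj f N \<xi> (Ys l) t \<le> Mu"
    using muj_le[OF t2 slope_le_H[OF l] inc_Ys[OF l]] unfolding Mu_def .
  have "2 * r * muj f N \<xi> (Ys l) t * (pt (Ys l) t - pt (Ys l) (t-1)) powr (1/real N)
      \<le> 2 * r * Mu * (pt (Ys l) t - pt (Ys l) (t-1)) powr (1/real N)"
    using mu r by (intro mult_right_mono mult_left_mono) auto
  then show ?thesis using charR_bounds(3)[OF t2 ab xi r, where f=f and N=N] unfolding Rc_def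
    by linarith
qed

lemma Rc_lower:
  assumes l: "l \<ge> 1" and t: "t \<in> {2..q l}"
  shows "Rc l t \<ge> -2 * f (pt (Ys l) t)"
proof -
  have inj: "inj_on xs {1..q l}" using injq[OF l] .
  have len: "length (Ys l) = q l" using sorted_facts(1)[OF inj] .
  have t2: "2 \<le> t" "t \<le> length (Ys l)" using t len by auto
  have ab: "pt (Ys l) (t-1) < pt (Ys l) t" using inc_Ys[OF l] t2 by auto
  show ?thesis using charR_bounds(1)[OF t2 ab xi r, where f=f and N=N] unfolding Rc_def .
qed

lemma lp_inf:
  assumes "y \<in> limit_points xs" "\<epsilon> > 0"
  shows "infinite {n. \<bar>xs n - y\<bar> < \<epsilon>}"
proof -
  obtain \<sigma> where s: "strict_mono \<sigma>" "(xs \<circ> \<sigma>) \<longlonglongrightarrow> y"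
    using assms(1) unfolding limit_points_def by blast
  then obtain M where M: "\<forall>m\<ge>M. dist ((xs \<circ> \<sigma>) m) y < \<epsilon>"
    using assms(2) LIMSEQ_def by metis
  have "\<sigma> ` {M..} \<subseteq> {n. \<bar>xs n - y\<bar> < \<epsilon>}" using M by (auto simp: dist_real_def)
  moreover have "infinite (\<sigma> ` {M..})"
    using s(1) by (simp add: finite_image_iff strict_mono_imp_inj_on infinite_Ici)
  ultimately show ?thesis using finite_subset by blast
qed

lemma lp_01:
  assumes "y \<in> limit_points xs"
  shows "y \<in> {0..1}"
proof -
  obtain \<sigma> where s: "strict_mono \<sigma>" "(xs \<circ> \<sigma>) \<longlonglongrightarrow> y"
    using assms(1) unfolding limit_points_def by blast
  have ev: "(xs \<circ> \<sigma>) m \<in> {0..1}" if "m \<ge> 1" for m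
  proof -
    have "\<sigma> m \<ge> m" using s(1) by (rule seq_suble)
    then show ?thesis using xs01[of "\<sigma> m"] that by simp
  qed
  have "0 \<le> y" using s(2) by (rule LIMSEQ_le_const) (use ev in auto)
  moreover have "y \<le> 1" using s(2) by (rule LIMSEQ_le_const2) (use ev in auto)
  ultimately show ?thesis by simp
qed

end
context plt begin

lemma supset:
  assumes xm: "xstar \<in> global_minimizers f"
    and th: "\<exists>Hs :: nat set.
                 infinite Hs \<and> (\<forall>l \<in> Hs. l \<ge> 1 \<and>
                   (let ys = sorted_trials xs (q l) in
                    \<exists>j \<in> {2 .. q l}. pt ys (j - 1) \<le> xstar \<and> xstar \<le> pt ys j \<and>
                      4 powr (1 - 1 / real N) * (Kj f N ys xstar j)\<^sup>2 \<ge> (Mj f N ys j)\<^sup>2 \<and>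
                      r * muj f N \<xi> ys j \<ge> 2 powr (1 - 1 / real N) * Kj f N ys xstar j
                        + sqrt (4 powr (1 - 1 / real N) * (Kj f N ys xstar j)\<^sup>2 - (Mj f N ys j)\<^sup>2)))"
  shows "xstar \<in> limit_points xs"
proof -
  have x01: "xstar \<in> {0..1}" and fmin: "\<And>y. y \<in> {0..1} \<Longrightarrow> f xstar \<le> f y"
    using xm unfolding global_minimizers_def by auto
  define fs where "fs = f xstar"
  define e where "e = 1 / real N"
  have e: "0 < e" "e \<le> 1" unfolding e_def using N by auto
  obtain Hs where Hs: "infinite Hs" and HsP: "\<And>l. l \<in> Hs \<Longrightarrow> l \<ge> 1 \<and>
                   (\<exists>j \<in> {2 .. q l}. pt (Ys l) (j - 1) \<le> xstar \<and> xstar \<le> pt (Ys l) j \<and>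
                      4 powr (1 - e) * (Kj f N (Ys l) xstar j)\<^sup>2 \<ge> (Mj f N (Ys l) j)\<^sup>2 \<and>
                      r * muj f N \<xi> (Ys l) j \<ge> 2 powr (1 - e) * Kj f N (Ys l) xstar j
                        + sqrt (4 powr (1 - e) * (Kj f N (Ys l) xstar j)\<^sup>2 - (Mj f N (Ys l) j)\<^sup>2))"
    using th unfolding Let_def Ys_def[symmetric] e_def by blast
  have "xstar islimpt (range xs)"
  proof (rule ccontr)
    assume "\<not> xstar islimpt (range xs)"
    then obtain \<epsilon> where ep: "\<epsilon> > 0" and far: "\<And>n. xs n \<noteq> xstar \<Longrightarrow> \<epsilon> \<le> \<bar>xs n - xstar\<bar>"
      unfolding islimpt_approachable dist_real_def by force
    define v where "v = \<xi> * \<epsilon> powr e / (4 * Mu)"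
    have vp: "v > 0" unfolding v_def using xi ep Mu_pos by simp
    define \<eta> where "\<eta> = v powr real N"
    have etap: "\<eta> > 0" unfolding \<eta>_def using vp by simp
    have "Hs \<subseteq> LongSet \<eta>"
    proof
      fix l assume lH: "l \<in> Hs"
      have l: "l \<ge> 1" using HsP[OF lH] by blast
      obtain j where j: "j \<in> {2..q l}" and c0: "pt (Ys l) (j - 1) \<le> xstar" "xstar \<le> pt (Ys l) j"
        and c1: "4 powr (1 - e) * (Kj f N (Ys l) xstar j)\<^sup>2 \<ge> (Mj f N (Ys l) j)\<^sup>2"
        and c2: "r * muj f N \<xi> (Ys l) j \<ge> 2 powr (1 - e) * Kj f N (Ys l) xstar j
                        + sqrt (4 powr (1 - e) * (Kj f N (Ys l) xstar j)\<^sup>2 - (Mj f N (Ys l) j)\<^sup>2)"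
        using HsP[OF lH] by blast
      have inj: "inj_on xs {1..q l}" using injq[OF l] .
      define a where "a = pt (Ys l) (j-1)"
      define b where "b = pt (Ys l) j"
      have ab: "a < b" unfolding a_def b_def using sorted_facts(2)[OF inj, of "j-1" j] j by auto
      have aS: "a \<in> St l" and bS: "b \<in> St l" unfolding a_def b_def using sorted_facts(3)[OF inj] j by auto
      then have ab01: "a \<in> {0..1}" "b \<in> {0..1}" using St01[OF l] by auto
      have farS: "s \<noteq> xstar \<Longrightarrow> \<epsilon> \<le> \<bar>s - xstar\<bar>" if "s \<in> St l" for s
        using that far unfolding St_def by auto
      have Dge: "b - a \<ge> \<epsilon>"
      proof (cases "a = xstar")
        case True
        then have "b \<noteq> xstar" using ab by simp
        then show ?thesis using farS[OF bS] True c0 unfolding b_def by auto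
      next
        case False
        then show ?thesis using farS[OF aS] c0 ab unfolding a_def b_def by auto
      qed
      have key: "r * muj f N \<xi> (Ys l) j * (b-a) powr e + (f b - f a)^2/(r * muj f N \<xi> (Ys l) j * (b-a) powr e)
          - (f b + f a) \<ge> -2*fs + r*\<xi>/2*(b-a) powr e"
        apply (rule key_ineq[where x=xstar and K="Kj f N (Ys l) xstar j" and M="Mj f N (Ys l) j"])
        using c0 ab e fmin[OF ab01(1)] fmin[OF ab01(2)] muj_ge[where f=f and N=N and \<xi>=\<xi> and ys="Ys l" and t=j]
          xi r c1 c2
        unfolding a_def b_def fs_def Kj_def Mj_def e_def by auto
      have Rj: "Rc l j = r * muj f N \<xi> (Ys l) j * (b-a) powr e + (f b - f a)^2/(r * muj f N \<xi> (Ys l) j * (b-a) powr e)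
          - (f b + f a)"
        unfolding Rc_def charR_def Let_def a_def b_def e_def by simp
      have "\<epsilon> powr e \<le> (b-a) powr e" using Dge ep by (intro powr_mono2) (use e in auto)
      then have "r*\<xi>/2*\<epsilon> powr e \<le> r*\<xi>/2*(b-a) powr e" using r xi by (intro mult_left_mono) auto
      with key Rj have Rjge: "Rc l j \<ge> -2*fs + r*\<xi>/2*\<epsilon> powr e" by linarith
      have k1: "1 \<in> {1..p(l+1)}" using run_step(1)[OF l] by simp
      define t where "t = Tt l 1"
      have "Rc l j \<le> Rc l t" unfolding t_def using Tt_props(3)[OF l k1 j] by simp
      define aT where "aT = pt (Ys l) (t-1)"
      define bT where "bT = pt (Ys l) t"
      have t2: "2 \<le> t" "t \<le> q l" using new_in_gap(1,2)[OF l inj k1] unfolding t_def by auto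
      have abt: "aT < bT" using new_in_gap(3)[OF l inj k1] unfolding t_def aT_def bT_def .
      have "aT \<in> St l" "bT \<in> St l" unfolding aT_def bT_def using sorted_facts(3)[OF inj] t2 by auto
      then have "aT \<in> {0..1}" "bT \<in> {0..1}" using St01[OF l] by auto
      then have fge: "f aT \<ge> fs" "f bT \<ge> fs" using fmin unfolding fs_def by auto
      have "Rc l t \<le> 2 * r * Mu * (bT - aT) powr e - f bT - f aT"
        using Rc_upper[OF l, of t] t2 unfolding aT_def bT_def e_def by auto
      with \<open>Rc l j \<le> Rc l t\<close> Rjge fge
      have "2 * r * Mu * (bT - aT) powr e \<ge> r*\<xi>/2*\<epsilon> powr e" by linarith
      then have "r * (4 * Mu * (bT - aT) powr e) \<ge> r * (\<xi> * \<epsilon> powr e)" by (simp add: algebra_simps)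
      then have "4 * Mu * (bT - aT) powr e \<ge> \<xi> * \<epsilon> powr e" using r by simp
      then have vle: "v \<le> (bT - aT) powr e" unfolding v_def using Mu_pos by (simp add: divide_le_eq mult.commute)
      have "bT - aT \<ge> \<eta>"
      proof (rule ccontr)
        assume "\<not> bT - aT \<ge> \<eta>"
        then have "(bT - aT) powr e < \<eta> powr e" using abt e by (intro powr_less_mono2) auto
        also have "\<eta> powr e = v" unfolding \<eta>_def e_def using N vp by (simp add: powr_powr)
        finally show False using vle by simp
      qed
      then show "l \<in> LongSet \<eta>" unfolding LongSet_def using l k1 unfolding t_def aT_def bT_def by blast
    qed
    then have "finite Hs" using long_finite[OF etap] finite_subset by blast
    then show False using Hs by simp
  qed
  then show ?thesis unfolding limit_points_def using islimpt_range_imp_convergent_subsequence by blast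
qed

end

lemma find_iter:
  fixes g :: "nat \<Rightarrow> nat"
  assumes "a \<le> b" "g a < n" "n \<le> g b"
  shows "\<exists>l. a \<le> l \<and> l < b \<and> g l < n \<and> n \<le> g (Suc l)"
proof -
  have "n \<le> g b \<longrightarrow> (\<exists>l. a \<le> l \<and> l < b \<and> g l < n \<and> n \<le> g (Suc l))"
    using assms(1)
  proof (induct b rule: dec_induct)
    case base then show ?case using assms(2) by simp
  next
    case (step m)
    show ?case
    proof
      assume n: "n \<le> g (Suc m)"
      show "\<exists>l. a \<le> l \<and> l < Suc m \<and> g l < n \<and> n \<le> g (Suc l)"
      proof (cases "n \<le> g m")
        case True then show ?thesis using step by (meson less_SucI)
      next
        case False then show ?thesis using n step(1) by (intro exI[of _ m]) auto
      qed
    qed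
  qed
  then show ?thesis using assms(3) by blast
qed

context plt begin

lemma minimizer_exists: "\<exists>x\<in>{0..1}. \<forall>y\<in>{0..1}. f x \<le> f y"
proof -
  have "continuous_on {0..1} f"
    unfolding continuous_on_iff
  proof (intro ballI allI impI)
    fix x e :: real assume x: "x \<in> {0..1}" and e: "e > 0"
    obtain \<rho> where rp: "\<rho> > 0" and U: "\<forall>x\<in>{0..1}. \<forall>z\<in>{0..1}. \<bar>x - z\<bar> < \<rho> \<longrightarrow> \<bar>f x - f z\<bar> \<le> e/2"
      using unif_cont[of "e/2"] e by auto
    show "\<exists>d>0. \<forall>x'\<in>{0..1}. dist x' x < d \<longrightarrow> dist (f x') (f x) < e"
    proof (intro exI[of _ \<rho>] conjI ballI impI)
      show "\<rho> > 0" using rp .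
      fix z assume z: "z \<in> {0..1}" "dist z x < \<rho>"
      then have "\<bar>f z - f x\<bar> \<le> e/2" using U x by (auto simp: dist_real_def)
      then show "dist (f z) (f x) < e" using e by (simp add: dist_real_def)
    qed
  qed
  then show ?thesis by (intro continuous_attains_inf) auto
qed

lemma subset:
  assumes lp: "x' \<in> limit_points xs"
    and th: "\<forall>xstar \<in> global_minimizers f. \<exists>Hs :: nat set.
                 infinite Hs \<and> (\<forall>l \<in> Hs. l \<ge> 1 \<and>
                   (let ys = sorted_trials xs (q l) in
                    \<exists>j \<in> {2 .. q l}. pt ys (j - 1) \<le> xstar \<and> xstar \<le> pt ys j \<and>
                      4 powr (1 - 1 / real N) * (Kj f N ys xstar j)\<^sup>2 \<ge> (Mj f N ys j)\<^sup>2 \<and>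
                      r * muj f N \<xi> ys j \<ge> 2 powr (1 - 1 / real N) * Kj f N ys xstar j
                        + sqrt (4 powr (1 - 1 / real N) * (Kj f N ys xstar j)\<^sup>2 - (Mj f N ys j)\<^sup>2)))"
  shows "x' \<in> global_minimizers f"
proof -
  have x01: "x' \<in> {0..1}" using lp_01[OF lp] .
  have "f x' \<le> f y0" if y0: "y0 \<in> {0..1}" for y0
  proof (rule ccontr)
    assume "\<not> f x' \<le> f y0"
    then have y0lt: "f y0 < f x'" by simp
    obtain xstar where xs01': "xstar \<in> {0..1}" and xmin: "\<forall>y\<in>{0..1}. f xstar \<le> f y"
      using minimizer_exists by blast
    have xG: "xstar \<in> global_minimizers f" unfolding global_minimizers_def using xs01' xmin by auto
    have xlp: "xstar \<in> limit_points xs" using supset[OF xG] th xG by blast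
    define fs where "fs = f xstar"
    define \<delta> where "\<delta> = f x' - fs"
    have dp: "\<delta> > 0" unfolding \<delta>_def fs_def using xmin y0 y0lt by force
    define e where "e = 1 / real N"
    have e: "0 < e" "e \<le> 1" unfolding e_def using N by auto
    obtain \<rho> where rp: "\<rho> > 0" and U: "\<forall>x\<in>{0..1}. \<forall>z\<in>{0..1}. \<bar>x - z\<bar> < \<rho> \<longrightarrow> \<bar>f x - f z\<bar> \<le> \<delta>/4"
      using unif_cont[of "\<delta>/4"] dp by auto
    have "infinite {n. \<bar>xs n - xstar\<bar> < \<rho>}" using lp_inf[OF xlp rp] .
    then have "infinite ({n. \<bar>xs n - xstar\<bar> < \<rho>} - {0})" by simp
    then obtain B where B: "finite B" "card B = Q + 1" "B \<subseteq> {n. \<bar>xs n - xstar\<bar> < \<rho>} - {0}"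
      using infinite_arbitrarily_large by blast
    have Bne: "B \<noteq> {}" using B(2) by auto
    define L1 where "L1 = Max B"
    have "Max B \<in> B" using B(1) Bne by (rule Max_in)
    then have L1: "L1 \<ge> 1" unfolding L1_def using B(3) by force
    have Bvals: "f (xs n) \<le> fs + \<delta>/4" "n \<ge> 1" if "n \<in> B" for n
    proof -
      show "n \<ge> 1" using B(3) that by auto
      then have "xs n \<in> {0..1}" using xs01 by blast
      moreover have "\<bar>xs n - xstar\<bar> < \<rho>" using B(3) that by auto
      ultimately have "\<bar>f (xs n) - f xstar\<bar> \<le> \<delta>/4" using U xs01' by blast
      then show "f (xs n) \<le> fs + \<delta>/4" unfolding fs_def by linarith
    qed
    have Rsel: "Rc l (Tt l k) \<ge> -2*fs - \<delta>/2" if l: "l \<ge> L1" and k: "k \<in> {1..p(l+1)}" for l k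
    proof -
      have l1: "l \<ge> 1" using l L1 by simp
      have inj: "inj_on xs {1..q l}" using injq[OF l1] .
      have Bq: "B \<subseteq> {1..q l}"
      proof
        fix n assume n: "n \<in> B"
        have "n \<le> L1" unfolding L1_def using B(1) n by simp
        then have "n \<le> q l" using q_ge[OF l1] l by simp
        then show "n \<in> {1..q l}" using Bvals(2)[OF n] by simp
      qed
      define P' where "P' = {i\<in>{1..q l}. pt (Ys l) i \<in> xs ` B}"
      have injpt: "inj_on (pt (Ys l)) {1..q l}"
      proof (rule inj_onI)
        fix i j assume ij: "i \<in> {1..q l}" "j \<in> {1..q l}" "pt (Ys l) i = pt (Ys l) j"
        show "i = j"
        proof (rule ccontr)
          assume "i \<noteq> j"
          then consider "i < j" | "j < i" by linarith
          then show False using sorted_facts(2)[OF inj, of i j] sorted_facts(2)[OF inj, of j i] ij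
            by cases auto
        qed
      qed
      have img: "pt (Ys l) ` P' = xs ` B"
      proof
        show "pt (Ys l) ` P' \<subseteq> xs ` B" unfolding P'_def by auto
        show "xs ` B \<subseteq> pt (Ys l) ` P'"
        proof
          fix s assume s: "s \<in> xs ` B"
          then have "s \<in> St l" using Bq unfolding St_def by auto
          then obtain i where "1 \<le> i" "i \<le> q l" "pt (Ys l) i = s" using sorted_facts(4)[OF inj] by blast
          then show "s \<in> pt (Ys l) ` P'" unfolding P'_def using s by force
        qed
      qed
      have injB: "inj_on xs B" using inj Bq by (rule inj_on_subset)
      have injP': "inj_on (pt (Ys l)) P'" using injpt by (rule inj_on_subset) (auto simp: P'_def)
      have "card P' = card (pt (Ys l) ` P')" using card_image[OF injP'] by simp
      also have "\<dots> = card B" using img card_image[OF injB] by simp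
      finally have cP': "card P' = Q + 1" using B(2) by simp
      define P where "P = P' - {1}"
      have finP': "finite P'" unfolding P'_def by simp
      have cP: "card P \<ge> Q" unfolding P_def using cP' card_Diff_singleton_if[of P' 1] by simp
      have P2: "P \<subseteq> {2..q l}" unfolding P_def P'_def by auto
      have kQ: "k \<le> Q" using k run_step(3)[OF l1] by simp
      have "card (Tt l ` {1..<k}) \<le> card {1..<k}" by (rule card_image_le) simp
      also have "\<dots> < Q" using kQ k by auto
      finally have cT: "card (Tt l ` {1..<k}) < card P" using cP by simp
      have "\<not> P \<subseteq> Tt l ` {1..<k}"
      proof
        assume "P \<subseteq> Tt l ` {1..<k}"
        then have "card P \<le> card (Tt l ` {1..<k})" by (intro card_mono) auto
        then show False using cT by simp
      qed
      then obtain i where i: "i \<in> P" "i \<notin> Tt l ` {1..<k}" by blast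
      have iq: "i \<in> {2..q l}" using i P2 by auto
      have h1: "Rc l i \<le> Rc l (Tt l k)" using Tt_props(3)[OF l1 k iq i(2)] .
      have h2: "-2 * f (pt (Ys l) i) \<le> Rc l i" using Rc_lower[OF l1 iq] .
      have "pt (Ys l) i \<in> xs ` B" using i unfolding P_def P'_def by auto
      then obtain n where "n \<in> B" "pt (Ys l) i = xs n" by auto
      then have h3: "f (pt (Ys l) i) \<le> fs + \<delta>/4" using Bvals by simp
      have h4: "-2*fs - \<delta>/2 \<le> -2 * f (pt (Ys l) i)" using h3 by simp
      show ?thesis using order_trans[OF h4 order_trans[OF h2 h1]] .
    qed
    define \<rho>2 where "\<rho>2 = \<rho>/2"
    have r2p: "\<rho>2 > 0" unfolding \<rho>2_def using rp by simp
    define v where "v = \<delta> / (2 * r * Mu)"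
    have vp: "v > 0" unfolding v_def using dp r Mu_pos by simp
    define \<eta> where "\<eta> = min \<rho>2 (v powr real N)"
    have etap: "\<eta> > 0" unfolding \<eta>_def using r2p vp by simp
    have "infinite {n. \<bar>xs n - x'\<bar> < \<rho>2}" using lp_inf[OF lp r2p] .
    then have infA: "infinite ({n. \<bar>xs n - x'\<bar> < \<rho>2} - {..q L1})" by simp
    have claim: "\<exists>l. l \<in> LongSet \<eta> \<and> n \<le> q (l+1)" if n: "n \<in> {n. \<bar>xs n - x'\<bar> < \<rho>2} - {..q L1}" for n
    proof -
      have nq: "q L1 < n" and nx: "\<bar>xs n - x'\<bar> < \<rho>2" using n by auto
      have "L1 + 1 \<le> q L1" using q_ge[OF L1] .
      then have n1: "n \<ge> 1" "L1 \<le> n" using nq by auto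
      have "n \<le> q n" using q_ge[OF n1(1)] by simp
      then obtain l where l: "L1 \<le> l" "l < n" "q l < n" "n \<le> q (Suc l)"
        using find_iter[of L1 n q n] n1 nq by blast
      have l1: "l \<ge> 1" using l L1 by simp
      have inj: "inj_on xs {1..q l}" using injq[OF l1] .
      define k where "k = n - q l"
      have k: "k \<in> {1..p(l+1)}" unfolding k_def using l run_step(4)[OF l1] by auto
      have nk: "n = q l + k" unfolding k_def using l by simp
      define t where "t = Tt l k"
      define a where "a = pt (Ys l) (t-1)"
      define b where "b = pt (Ys l) t"
      have t2: "t \<in> {2..q l}" using new_in_gap(1,2)[OF l1 inj k] unfolding t_def by auto
      have ab: "a < b" using new_in_gap(3)[OF l1 inj k] unfolding a_def b_def t_def .
      have pos: "a \<le> xs n" "xs n \<le> b"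
      proof -
        have "\<alpha>*(b-a) > 0" using alpha_pos ab by simp
        moreover have "a + \<alpha>*(b-a) \<le> xs n" "xs n \<le> b - \<alpha>*(b-a)"
          using new_in_gap(4,5)[OF l1 inj k] unfolding nk a_def b_def t_def by auto
        ultimately show "a \<le> xs n" "xs n \<le> b" by linarith+
      qed
      have "a \<in> St l" "b \<in> St l" unfolding a_def b_def using sorted_facts(3)[OF inj] t2 by auto
      then have ab01: "a \<in> {0..1}" "b \<in> {0..1}" using St01[OF l1] by auto
      have "b - a \<ge> \<eta>"
      proof (rule ccontr)
        assume "\<not> b - a \<ge> \<eta>"
        then have D: "b - a < \<rho>2" "b - a < v powr real N" unfolding \<eta>_def by auto
        have "\<bar>a - x'\<bar> < \<rho>" "\<bar>b - x'\<bar> < \<rho>" using D(1) pos nx unfolding \<rho>2_def abs_less_iff by linarith+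
        then have "\<bar>f a - f x'\<bar> \<le> \<delta>/4" "\<bar>f b - f x'\<bar> \<le> \<delta>/4" using U ab01 x01 by blast+
        then have fab: "f a \<ge> f x' - \<delta>/4" "f b \<ge> f x' - \<delta>/4" by linarith+
        have "Rc l t \<le> 2 * r * Mu * (b - a) powr e - f b - f a"
          using Rc_upper[OF l1 t2] unfolding a_def b_def e_def by simp
        moreover have "Rc l t \<ge> -2*fs - \<delta>/2" using Rsel[OF l(1) k] unfolding t_def .
        ultimately have "2 * r * Mu * (b - a) powr e \<ge> \<delta>" using fab \<delta>_def by linarith
        then have "(2 * r * Mu) * (b - a) powr e \<ge> (2 * r * Mu) * v" unfolding v_def using r Mu_pos by simp
        then have vle: "v \<le> (b - a) powr e" using r Mu_pos by (simp add: mult_le_cancel_left_pos)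
        have "(b - a) powr e < (v powr real N) powr e" using D(2) ab e by (intro powr_less_mono2) auto
        also have "(v powr real N) powr e = v" unfolding e_def using N vp by (simp add: powr_powr)
        finally show False using vle by simp
      qed
      then have "l \<in> LongSet \<eta>" unfolding LongSet_def using l1 k unfolding t_def a_def b_def by blast
      then show ?thesis using l nk by auto
    qed
    obtain Lm where Lm: "\<forall>l\<in>LongSet \<eta>. l \<le> Lm" using long_finite[OF etap] finite_nat_set_iff_bounded_le by blast
    have "{n. \<bar>xs n - x'\<bar> < \<rho>2} - {..q L1} \<subseteq> {..q (Lm + 1)}"
    proof
      fix n assume "n \<in> {n. \<bar>xs n - x'\<bar> < \<rho>2} - {..q L1}"
      then obtain l where l: "l \<in> LongSet \<eta>" "n \<le> q (l+1)" using claim by blast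
      have "q (l+1) \<le> q (Lm+1)" using q_mono[of "l+1" "Lm+1"] Lm l(1) by simp
      then show "n \<in> {..q (Lm+1)}" using l by simp
    qed
    then show False using infA finite_subset by blast
  qed
  then show ?thesis unfolding global_minimizers_def using x01 by blast
qed

end

theorem corollary2:
  fixes f :: "real \<Rightarrow> real" and N Q :: nat and r \<xi> H :: real
    and xs :: "nat \<Rightarrow> real" and q p :: "nat \<Rightarrow> nat"
  assumes N: "N \<ge> 1" and r: "r > 1" and xi: "\<xi> > 0"
    and hoelder: "\<forall>x' \<in> {0..1}. \<forall>x'' \<in> {0..1}.
                    \<bar>f x' - f x''\<bar> \<le> H * \<bar>x' - x''\<bar> powr (1 / real N)"
    and run: "PLT_run f N r \<xi> Q xs q p"
    and thm2: "\<forall>xstar \<in> global_minimizers f. \<exists>Hs :: nat set.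
                 infinite Hs \<and> (\<forall>l \<in> Hs. l \<ge> 1 \<and>
                   (let ys = sorted_trials xs (q l) in
                    \<exists>j \<in> {2 .. q l}. pt ys (j - 1) \<le> xstar \<and> xstar \<le> pt ys j \<and>
                      4 powr (1 - 1 / real N) * (Kj f N ys xstar j)\<^sup>2 \<ge> (Mj f N ys j)\<^sup>2 \<and>
                      r * muj f N \<xi> ys j \<ge> 2 powr (1 - 1 / real N) * Kj f N ys xstar j
                        + sqrt (4 powr (1 - 1 / real N) * (Kj f N ys xstar j)\<^sup>2 - (Mj f N ys j)\<^sup>2)))"
  shows "limit_points xs = global_minimizers f"
proof -
  interpret plt f N Q r \<xi> H xs q p using N r xi hoelder run by unfold_locales
  show ?thesis
  proof
    show "limit_points xs \<subseteq> global_minimizers f"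
    proof
      fix x assume "x \<in> limit_points xs"
      then show "x \<in> global_minimizers f" using subset thm2 by blast
    qed
    show "global_minimizers f \<subseteq> limit_points xs"
    proof
      fix x assume x: "x \<in> global_minimizers f"
      have "\<exists>Hs :: nat set.
                 infinite Hs \<and> (\<forall>l \<in> Hs. l \<ge> 1 \<and>
                   (let ys = sorted_trials xs (q l) in
                    \<exists>j \<in> {2 .. q l}. pt ys (j - 1) \<le> x \<and> x \<le> pt ys j \<and>
                      4 powr (1 - 1 / real N) * (Kj f N ys x j)\<^sup>2 \<ge> (Mj f N ys j)\<^sup>2 \<and>
                      r * muj f N \<xi> ys j \<ge> 2 powr (1 - 1 / real N) * Kj f N ys x j
                        + sqrt (4 powr (1 - 1 / real N) * (Kj f N ys x j)\<^sup>2 - (Mj f N ys j)\<^sup>2)))"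
        using thm2 x by blast
      then show "x \<in> limit_points xs" using supset[OF x] by blast
    qed
  qed
qed

end
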